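(* Let $n\ge 1$ and let $P(z)=z^n+a_{n-2}z^{n-2}+\dots+a_1z+a_0\in\mathbb{C}[z]$ be a normalized polynomial of degree $n$. Then $P\in\overline{\mathbb{Q}}[z]$ if and only if $B_P\subset\overline{\mathbb{Q}}$.
   Context: $\overline{\mathbb{Q}}\subset\mathbb{C}$ denotes the field of algebraic numbers. A critical point of $P$ is a $\zeta\in\mathbb{C}$ with $P'(\zeta)=0$; a critical value is $P(\zeta)$ for a critical point $\zeta$; $B_P$ denotes the (finite) set of critical values of $P$. A polynomial of degree $n$ is called normalized if it is monic and its coefficient of $z^{n-1}$ is $0$. *)

theory Defs
  imports "HOL-Computational_Algebra.Polynomial"
begin

definition critical_values :: "complex poly \<Rightarrow> complex set" where
  "critical_values P = {poly P \<zeta> | \<zeta>. poly (pderiv P) \<zeta> = 0}"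

definition normalized_poly :: "complex poly \<Rightarrow> bool" where
  "normalized_poly P \<longleftrightarrow> lead_coeff P = 1 \<and> coeff P (degree P - 1) = 0"

end

theory Submission
  imports Defs "HOL-Computational_Algebra.Fundamental_Theorem_Algebra"
begin
definition csubfield :: "complex set \<Rightarrow> bool" where
 "csubfield F \<longleftrightarrow> 0 \<in> F \<and> 1 \<in> F \<and> (\<forall>x\<in>F. \<forall>y\<in>F. x + y \<in> F \<and> x * y \<in> F) \<and> (\<forall>x\<in>F. -x \<in> F \<and> inverse x \<in> F)"

definition is_deriv :: "complex set \<Rightarrow> (complex \<Rightarrow> complex) \<Rightarrow> bool" where
 "is_deriv F D \<longleftrightarrow> (\<forall>x\<in>F. \<forall>y\<in>F. D (x+y) = D x + D y \<and> D (x*y) = x * D y + y * D x)"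

definition Fpoly :: "complex set \<Rightarrow> complex poly \<Rightarrow> bool" where
 "Fpoly F p \<longleftrightarrow> (\<forall>i. coeff p i \<in> F)"

context fixes F assumes F: "csubfield F" begin

lemma F0: "0 \<in> F" and F1: "1 \<in> F" using F unfolding csubfield_def by auto
lemma Fadd: "x \<in> F \<Longrightarrow> y \<in> F \<Longrightarrow> x + y \<in> F" using F unfolding csubfield_def by auto
lemma Fmult: "x \<in> F \<Longrightarrow> y \<in> F \<Longrightarrow> x * y \<in> F" using F unfolding csubfield_def by auto
lemma Fuminus: "x \<in> F \<Longrightarrow> -x \<in> F" using F unfolding csubfield_def by auto
lemma Finverse: "x \<in> F \<Longrightarrow> inverse x \<in> F" using F unfolding csubfield_def by auto
lemma Fdiff: "x \<in> F \<Longrightarrow> y \<in> F \<Longrightarrow> x - y \<in> F"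
  using Fadd[of x "-y"] Fuminus[of y] by simp
lemma Fdivide: "x \<in> F \<Longrightarrow> y \<in> F \<Longrightarrow> x / y \<in> F"
  using Fmult[of x "inverse y"] Finverse[of y] by (simp add: divide_inverse)
lemma Fpower: "x \<in> F \<Longrightarrow> x ^ n \<in> F"
  by (induction n) (auto intro: Fmult F1)
lemma Fsum: "(\<And>i. i \<in> A \<Longrightarrow> f i \<in> F) \<Longrightarrow> sum f A \<in> F"
proof (induction A rule: infinite_finite_induct)
  case (infinite A) then show ?case by (simp add: F0)
next
  case empty then show ?case by (simp add: F0)
next
  case (insert x A) then show ?case by (simp add: Fadd)
qed
lemma Fprod: "(\<And>i. i \<in> A \<Longrightarrow> f i \<in> F) \<Longrightarrow> prod f A \<in> F"
proof (induction A rule: infinite_finite_induct)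
  case (infinite A) then show ?case by (simp add: F1)
next
  case empty then show ?case by (simp add: F1)
next
  case (insert x A) then show ?case by (simp add: Fmult)
qed
lemma Fof_nat: "of_nat n \<in> F"
  by (induction n) (auto simp: F0 F1 Fadd)
lemma Fof_int: "of_int z \<in> F"
proof (cases "z \<ge> 0")
  case True then show ?thesis using Fof_nat[of "nat z"] by simp
next
  case False then show ?thesis using Fuminus[OF Fof_nat[of "nat (-z)"]] by simp
qed
lemma FRats: "x \<in> \<rat> \<Longrightarrow> x \<in> F"
  by (erule Rats_cases') (auto intro: Fdivide Fof_int)

lemma Fpoly_add: "Fpoly F p \<Longrightarrow> Fpoly F q \<Longrightarrow> Fpoly F (p + q)"
  by (auto simp: Fpoly_def intro: Fadd)
lemma Fpoly_diff: "Fpoly F p \<Longrightarrow> Fpoly F q \<Longrightarrow> Fpoly F (p - q)"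
  by (auto simp: Fpoly_def intro: Fdiff)
lemma Fpoly_mult: "Fpoly F p \<Longrightarrow> Fpoly F q \<Longrightarrow> Fpoly F (p * q)"
  by (auto simp: Fpoly_def coeff_mult intro!: Fsum Fmult)
lemma Fpoly_const: "c \<in> F \<Longrightarrow> Fpoly F [:c:]"
  by (auto simp: Fpoly_def coeff_pCons F0 split: nat.splits)
lemma Fpoly_pCons: "c \<in> F \<Longrightarrow> Fpoly F p \<Longrightarrow> Fpoly F (pCons c p)"
  by (auto simp: Fpoly_def coeff_pCons split: nat.splits)
lemma Fpoly_0: "Fpoly F 0" by (simp add: Fpoly_def F0)
lemma Fpoly_1: "Fpoly F 1" by (simp add: Fpoly_def F0 F1 coeff_1)
lemma Fpoly_monom: "c \<in> F \<Longrightarrow> Fpoly F (monom c k)"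
  by (auto simp: Fpoly_def coeff_monom F0)
lemma Fpoly_smult: "c \<in> F \<Longrightarrow> Fpoly F p \<Longrightarrow> Fpoly F (smult c p)"
  by (auto simp: Fpoly_def intro: Fmult)
lemma Fpoly_pderiv: "Fpoly F p \<Longrightarrow> Fpoly F (pderiv p)"
  unfolding Fpoly_def coeff_pderiv by (intro allI Fmult Fof_nat) auto
lemma Fpoly_power: "Fpoly F p \<Longrightarrow> Fpoly F (p ^ n)"
  by (induction n) (auto intro: Fpoly_mult Fpoly_1)
lemma Fpoly_pcompose: "Fpoly F p \<Longrightarrow> Fpoly F q \<Longrightarrow> Fpoly F (pcompose p q)"
proof (induction p)
  case 0 then show ?case by (simp add: Fpoly_0)
next
  case (pCons a p)
  have "a \<in> F" "Fpoly F p" using pCons.prems by (auto simp: Fpoly_def coeff_pCons split: nat.splits dest: spec[of _ 0] spec[of _ "Suc _"])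
  then show ?case using pCons by (auto simp: pcompose_pCons intro!: Fpoly_add Fpoly_const Fpoly_mult)
qed
lemma Fpoly_prod: "(\<And>i. i \<in> A \<Longrightarrow> Fpoly F (f i)) \<Longrightarrow> Fpoly F (prod f A)"
proof (induction A rule: infinite_finite_induct)
  case (infinite A) then show ?case by (simp add: Fpoly_1)
next
  case empty then show ?case by (simp add: Fpoly_1)
next
  case (insert x A) then show ?case by (simp add: Fpoly_mult)
qed
lemma Fpoly_poly: "Fpoly F p \<Longrightarrow> x \<in> F \<Longrightarrow> poly p x \<in> F"
  by (auto simp: poly_altdef Fpoly_def intro!: Fsum Fmult Fpower)

end

lemma csubfield_Rats: "csubfield \<rat>"
  by (auto simp: csubfield_def)

context fixes F D assumes F: "csubfield F" and D: "is_deriv F D" begin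

lemma Dadd: "x \<in> F \<Longrightarrow> y \<in> F \<Longrightarrow> D (x + y) = D x + D y" using D unfolding is_deriv_def by auto
lemma Dmult: "x \<in> F \<Longrightarrow> y \<in> F \<Longrightarrow> D (x * y) = x * D y + y * D x" using D unfolding is_deriv_def by auto
lemma D0: "D 0 = 0" using Dadd[of 0 0] F0[OF F] by simp
lemma D1: "D 1 = 0" using Dmult[of 1 1] F1[OF F] by simp
lemma Duminus: "x \<in> F \<Longrightarrow> D (-x) = - D x"
proof -
  assume x: "x \<in> F"
  have "D x + D (-x) = 0" using Dadd[of x "-x"] Fuminus[OF F x] x D0 by simp
  then show ?thesis by (metis minus_unique)
qed
lemma Ddiff: "x \<in> F \<Longrightarrow> y \<in> F \<Longrightarrow> D (x - y) = D x - D y"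
  using Dadd[of x "-y"] Duminus[of y] Fuminus[OF F, of y] by simp
lemma Dinverse: "x \<in> F \<Longrightarrow> D (inverse x) = - D x / x^2"
proof (cases "x = 0")
  case True then show ?thesis by (simp add: D0)
next
  case False
  assume x: "x \<in> F"
  have "D (x * inverse x) = 0" using False D1 by simp
  then have "x * D (inverse x) + inverse x * D x = 0" using Dmult[OF x Finverse[OF F x]] by simp
  then have "x * (x * D (inverse x) + inverse x * D x) = 0" by simp
  moreover have "x * (D x * inverse x) = D x" using False by simp
  ultimately have "x * x * D (inverse x) + D x = 0" by (simp add: algebra_simps)
  then have "x * x * D (inverse x) = - D x" by (metis add_eq_0_iff2 minus_unique)
  then show ?thesis using False by (simp add: field_simps power2_eq_square)
qed
lemma Dsum: "(\<And>i. i \<in> A \<Longrightarrow> f i \<in> F) \<Longrightarrow> D (sum f A) = (\<Sum>i\<in>A. D (f i))"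
proof (induction A rule: infinite_finite_induct)
  case (infinite A) then show ?case by (simp add: D0)
next
  case empty then show ?case by (simp add: D0)
next
  case (insert x A) then show ?case by (simp add: Dadd Fsum[OF F])
qed
lemma Dof_nat: "D (of_nat n) = 0"
  by (induction n) (auto simp: D0 D1 Dadd Fof_nat[OF F] F1[OF F])
lemma Dof_int: "D (of_int z) = 0"
proof (cases "z \<ge> 0")
  case True then show ?thesis using Dof_nat[of "nat z"] by simp
next
  case False then show ?thesis using Duminus[OF Fof_nat[OF F, of "nat (-z)"]] Dof_nat[of "nat (-z)"] by simp
qed
lemma DRats: "x \<in> \<rat> \<Longrightarrow> D x = 0"
proof (erule Rats_cases')
  fix a b :: int assume "x = of_int a / of_int b"
  then show "D x = 0"
    using Dmult[OF Fof_int[OF F, of a] Finverse[OF F Fof_int[OF F, of b]]]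
      Dinverse[OF Fof_int[OF F, of b]] Dof_int by (simp add: divide_inverse)
qed

lemma coeff_dp: "coeff (map_poly D p) i = D (coeff p i)"
  by (simp add: coeff_map_poly D0)

lemma dp_add: "Fpoly F p \<Longrightarrow> Fpoly F q \<Longrightarrow> map_poly D (p + q) = map_poly D p + map_poly D q"
  by (rule poly_eqI) (simp add: coeff_dp Dadd Fpoly_def)
lemma dp_diff: "Fpoly F p \<Longrightarrow> Fpoly F q \<Longrightarrow> map_poly D (p - q) = map_poly D p - map_poly D q"
  by (rule poly_eqI) (simp add: coeff_dp Ddiff Fpoly_def)
lemma dp_mult: "Fpoly F p \<Longrightarrow> Fpoly F q \<Longrightarrow> map_poly D (p * q) = map_poly D p * q + p * map_poly D q"
proof (rule poly_eqI)
  fix n assume p: "Fpoly F p" and q: "Fpoly F q"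
  have "coeff (map_poly D (p * q)) n = D (\<Sum>i\<le>n. coeff p i * coeff q (n - i))"
    by (simp add: coeff_dp coeff_mult)
  also have "\<dots> = (\<Sum>i\<le>n. D (coeff p i * coeff q (n - i)))"
    using p q by (intro Dsum) (auto simp: Fpoly_def intro: Fmult[OF F])
  also have "\<dots> = (\<Sum>i\<le>n. D (coeff p i) * coeff q (n - i) + coeff p i * D (coeff q (n - i)))"
    using p q by (intro sum.cong refl) (auto simp: Fpoly_def Dmult)
  also have "\<dots> = coeff (map_poly D p * q + p * map_poly D q) n"
    by (simp add: coeff_mult coeff_dp sum.distrib)
  finally show "coeff (map_poly D (p * q)) n = coeff (map_poly D p * q + p * map_poly D q) n" .
qed
lemma dp_const: "map_poly D [:c:] = [:D c:]"
  by (rule poly_eqI) (simp add: coeff_dp coeff_pCons D0 split: nat.splits)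
lemma dp_1: "map_poly D 1 = 0"
  by (rule poly_eqI) (simp add: coeff_dp coeff_1 D0 D1)
lemma dp_pderiv: "Fpoly F p \<Longrightarrow> map_poly D (pderiv p) = pderiv (map_poly D p)"
proof (rule poly_eqI)
  fix n assume p: "Fpoly F p"
  have "D (of_nat (Suc n) * coeff p (Suc n)) = of_nat (Suc n) * D (coeff p (Suc n))"
    using Dmult[OF Fof_nat[OF F, of "Suc n"], of "coeff p (Suc n)"] p Dof_nat[of "Suc n"]
    by (simp add: Fpoly_def del: of_nat_Suc)
  then show "coeff (map_poly D (pderiv p)) n = coeff (pderiv (map_poly D p)) n"
    by (simp add: coeff_dp coeff_pderiv del: of_nat_Suc)
qed
lemma Fpoly_pCons_iff: "Fpoly F (pCons a p) \<longleftrightarrow> a \<in> F \<and> Fpoly F p"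
  unfolding Fpoly_def
  by (auto simp: coeff_pCons split: nat.splits dest: spec[of _ 0] spec[of _ "Suc _"])

lemma dp_pcompose: "Fpoly F R \<Longrightarrow> Fpoly F P \<Longrightarrow>
   map_poly D (pcompose R P) = pcompose (pderiv R) P * map_poly D P + pcompose (map_poly D R) P"
proof (induction R)
  case 0 then show ?case by simp
next
  case (pCons a R)
  have a: "a \<in> F" and R: "Fpoly F R" using pCons.prems by (auto simp: Fpoly_pCons_iff)
  have RP: "Fpoly F (pcompose R P)" using R pCons.prems by (simp add: Fpoly_pcompose[OF F])
  have "map_poly D (pcompose (pCons a R) P) = map_poly D ([:a:] + P * pcompose R P)"
    by (simp add: pcompose_pCons)
  also have "\<dots> = [:D a:] + (map_poly D P * pcompose R P + P * map_poly D (pcompose R P))"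
    using a RP pCons.prems
    by (simp add: dp_add dp_mult dp_const Fpoly_const[OF F] Fpoly_mult[OF F])
  also have "\<dots> = [:D a:] + (map_poly D P * pcompose R P + P * (pcompose (pderiv R) P * map_poly D P + pcompose (map_poly D R) P))"
    using pCons.IH R pCons.prems by simp
  also have "\<dots> = pcompose (pderiv (pCons a R)) P * map_poly D P + pcompose (map_poly D (pCons a R)) P"
    by (simp add: pderiv_pCons pcompose_pCons pcompose_add D0 map_poly_pCons algebra_simps)
  finally show ?case .
qed

lemma D_poly: "Fpoly F p \<Longrightarrow> x \<in> F \<Longrightarrow> D (poly p x) = poly (map_poly D p) x + poly (pderiv p) x * D x"
proof (induction p)
  case 0 then show ?case by (simp add: D0)
next
  case (pCons a p)
  have a: "a \<in> F" and p: "Fpoly F p" using pCons.prems by (auto simp: Fpoly_pCons_iff)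
  have px: "poly p x \<in> F" using Fpoly_poly[OF F p pCons.prems(2)] .
  have "D (poly (pCons a p) x) = D a + (x * D (poly p x) + poly p x * D x)"
    using Dadd[OF a Fmult[OF F pCons.prems(2) px]] Dmult[OF pCons.prems(2) px] by simp
  also have "\<dots> = poly (map_poly D (pCons a p)) x + poly (pderiv (pCons a p)) x * D x"
    using pCons.IH[OF p pCons.prems(2)] by (simp add: D0 pderiv_pCons map_poly_pCons algebra_simps)
  finally show ?case .
qed

lemma dp_prod: "(\<And>i. i \<in> A \<Longrightarrow> Fpoly F (f i)) \<Longrightarrow> (\<And>i. i \<in> A \<Longrightarrow> map_poly D (f i) = 0)
   \<Longrightarrow> map_poly D (prod f A) = 0"
proof (induction A rule: infinite_finite_induct)
  case (infinite A) then show ?case by (simp add: dp_1)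
next
  case empty then show ?case by (simp add: dp_1)
next
  case (insert x A) then show ?case by (simp add: dp_mult Fpoly_prod[OF F])
qed

end

context fixes F D \<alpha> \<delta>
  assumes F: "csubfield F" and D: "is_deriv F D"
  and H: "\<And>p. Fpoly F p \<Longrightarrow> poly p \<alpha> = 0 \<Longrightarrow> poly (map_poly D p) \<alpha> + poly (pderiv p) \<alpha> * \<delta> = 0"
begin

definition "E p = poly (map_poly D p) \<alpha> + poly (pderiv p) \<alpha> * \<delta>"

lemma E_add: "Fpoly F p \<Longrightarrow> Fpoly F q \<Longrightarrow> E (p + q) = E p + E q"
  by (simp add: E_def dp_add[OF F D] pderiv_add algebra_simps)
lemma E_mult: "Fpoly F p \<Longrightarrow> Fpoly F q \<Longrightarrow> E (p * q) = E p * poly q \<alpha> + poly p \<alpha> * E q"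
  by (simp add: E_def dp_mult[OF F D] pderiv_mult algebra_simps)
lemma E_uminus: "Fpoly F p \<Longrightarrow> E (- p) = - E p"
proof -
  assume p: "Fpoly F p"
  have "Fpoly F (-p)" using p Fpoly_diff[OF F Fpoly_0[OF F] p] by simp
  then have "E (p + (-p)) = E p + E (-p)" using E_add p by blast
  moreover have "E 0 = 0" by (simp add: E_def)
  ultimately show ?thesis by (metis add.right_inverse minus_unique)
qed
lemma E_const: "E [:c:] = D c"
  by (simp add: E_def dp_const[OF F D])
lemma E_X: "E [:0,1:] = \<delta>"
  by (simp add: E_def D0[OF F D] D1[OF F D] map_poly_pCons pderiv_pCons)
lemma E_zero: "Fpoly F p \<Longrightarrow> poly p \<alpha> = 0 \<Longrightarrow> E p = 0"
  using H by (simp add: E_def)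

definition "Fa = {poly p \<alpha> / poly q \<alpha> | p q. Fpoly F p \<and> Fpoly F q \<and> poly q \<alpha> \<noteq> 0}"

lemma Fa_mem: "Fpoly F p \<Longrightarrow> Fpoly F q \<Longrightarrow> poly q \<alpha> \<noteq> 0 \<Longrightarrow> poly p \<alpha> / poly q \<alpha> \<in> Fa"
  unfolding Fa_def by blast

lemma Fa_subfield: "csubfield Fa"
  unfolding csubfield_def
proof (intro conjI ballI)
  show "0 \<in> Fa" using Fa_mem[OF Fpoly_0[OF F] Fpoly_1[OF F]] by simp
  show "1 \<in> Fa" using Fa_mem[OF Fpoly_1[OF F] Fpoly_1[OF F]] by simp
next
  fix x y assume "x \<in> Fa" "y \<in> Fa"
  then obtain p1 q1 p2 q2 where r: "Fpoly F p1" "Fpoly F q1" "poly q1 \<alpha> \<noteq> 0" "x = poly p1 \<alpha> / poly q1 \<alpha>"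
    "Fpoly F p2" "Fpoly F q2" "poly q2 \<alpha> \<noteq> 0" "y = poly p2 \<alpha> / poly q2 \<alpha>" unfolding Fa_def by blast
  have xy1: "x + y = poly (p1 * q2 + p2 * q1) \<alpha> / poly (q1 * q2) \<alpha>"
    unfolding r(4) r(8) using r(3) r(7) by (simp add: field_simps)
  show "x + y \<in> Fa" unfolding xy1 using r by (intro Fa_mem Fpoly_add[OF F] Fpoly_mult[OF F]) auto
  have xy2: "x * y = poly (p1 * p2) \<alpha> / poly (q1 * q2) \<alpha>"
    unfolding r(4) r(8) using r(3) r(7) by (simp add: field_simps)
  show "x * y \<in> Fa" unfolding xy2 using r by (intro Fa_mem Fpoly_add[OF F] Fpoly_mult[OF F]) auto
next
  fix x assume "x \<in> Fa"
  then obtain p1 q1 where r: "Fpoly F p1" "Fpoly F q1" "poly q1 \<alpha> \<noteq> 0" "x = poly p1 \<alpha> / poly q1 \<alpha>"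
    unfolding Fa_def by blast
  have xy3: "-x = poly (0 - p1) \<alpha> / poly q1 \<alpha>" using r by simp
  show "-x \<in> Fa" unfolding xy3 using r by (intro Fa_mem Fpoly_diff[OF F] Fpoly_0[OF F]) auto
  show "inverse x \<in> Fa"
  proof (cases "poly p1 \<alpha> = 0")
    case True then show ?thesis using r Fa_mem[OF Fpoly_0[OF F] Fpoly_1[OF F]] by simp
  next
    case False then show ?thesis using r Fa_mem[OF r(2) r(1)] by simp
  qed
qed

lemma F_Fa: "F \<subseteq> Fa"
proof
  fix c assume "c \<in> F"
  then show "c \<in> Fa" using Fa_mem[OF Fpoly_const[OF F] Fpoly_1[OF F], of c] by simp
qed

lemma alpha_Fa: "\<alpha> \<in> Fa"
  using Fa_mem[OF Fpoly_pCons[OF F F0[OF F] Fpoly_const[OF F F1[OF F]]] Fpoly_1[OF F]] by simp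

definition "Dq p q = (E p * poly q \<alpha> - poly p \<alpha> * E q) / (poly q \<alpha>)^2"

lemma Dq_welldef:
  assumes "Fpoly F p1" "Fpoly F q1" "poly q1 \<alpha> \<noteq> 0"
      and "Fpoly F p2" "Fpoly F q2" "poly q2 \<alpha> \<noteq> 0"
      and eq: "poly p1 \<alpha> / poly q1 \<alpha> = poly p2 \<alpha> / poly q2 \<alpha>"
  shows "Dq p1 q1 = Dq p2 q2"
proof -
  have z: "poly (p1 * q2 - p2 * q1) \<alpha> = 0" using eq assms by (simp add: field_simps)
  have "Fpoly F (p1 * q2 - p2 * q1)" using assms by (intro Fpoly_diff[OF F] Fpoly_mult[OF F])
  then have "E (p1 * q2 - p2 * q1) = 0" using z E_zero by blast
  moreover have "E (p1 * q2 - p2 * q1) = E (p1 * q2) - E (p2 * q1)"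
    using E_add[of "p1 * q2" "- (p2 * q1)"] E_uminus[of "p2*q1"] assms
    by (simp add: Fpoly_mult[OF F] Fpoly_diff[OF F] Fpoly_0[OF F] flip: diff_conv_add_uminus
        del: minus_mult_left)
     (metis Fpoly_0[OF F] Fpoly_diff[OF F] Fpoly_mult[OF F] diff_0)
  ultimately have k: "E p1 * poly q2 \<alpha> + poly p1 \<alpha> * E q2 = E p2 * poly q1 \<alpha> + poly p2 \<alpha> * E q1"
    using assms by (simp add: E_mult)
  have p1: "poly p1 \<alpha> = poly p2 \<alpha> * poly q1 \<alpha> / poly q2 \<alpha>" using eq assms by (simp add: field_simps)
  show ?thesis unfolding Dq_def using k assms(3,6) unfolding p1
    by (simp add: field_simps power2_eq_square) algebra
qed


definition "rep x = (SOME pq. Fpoly F (fst pq) \<and> Fpoly F (snd pq) \<and> poly (snd pq) \<alpha> \<noteq> 0 \<and> x = poly (fst pq) \<alpha> / poly (snd pq) \<alpha>)"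
definition "D' x = Dq (fst (rep x)) (snd (rep x))"

lemma D'_eq: assumes "Fpoly F p" "Fpoly F q" "poly q \<alpha> \<noteq> 0" shows "D' (poly p \<alpha> / poly q \<alpha>) = Dq p q"
proof -
  let ?x = "poly p \<alpha> / poly q \<alpha>"
  let ?P = "\<lambda>pq. Fpoly F (fst pq) \<and> Fpoly F (snd pq) \<and> poly (snd pq) \<alpha> \<noteq> 0 \<and> ?x = poly (fst pq) \<alpha> / poly (snd pq) \<alpha>"
  have "?P (p, q)" using assms by simp
  then have "?P (rep ?x)" unfolding rep_def by (rule someI)
  then show ?thesis unfolding D'_def using Dq_welldef[of "fst (rep ?x)" "snd (rep ?x)" p q] assms by auto
qed

lemma E1: "E 1 = 0" using E_const[of 1] D1[OF F D] by (simp add: one_pCons)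

lemma D'_F: "c \<in> F \<Longrightarrow> D' c = D c"
  using D'_eq[OF Fpoly_const[OF F, of c] Fpoly_1[OF F]] by (simp add: Dq_def E1 E_const)

lemma D'_alpha: "D' \<alpha> = \<delta>"
  using D'_eq[OF Fpoly_pCons[OF F F0[OF F] Fpoly_const[OF F F1[OF F]]] Fpoly_1[OF F]]
  by (simp add: Dq_def E1 E_X)

lemma D'_deriv: "is_deriv Fa D'"
  unfolding is_deriv_def
proof (intro ballI conjI)
  fix x y assume "x \<in> Fa" "y \<in> Fa"
  then obtain p1 q1 p2 q2 where r: "Fpoly F p1" "Fpoly F q1" "poly q1 \<alpha> \<noteq> 0" "x = poly p1 \<alpha> / poly q1 \<alpha>"
    "Fpoly F p2" "Fpoly F q2" "poly q2 \<alpha> \<noteq> 0" "y = poly p2 \<alpha> / poly q2 \<alpha>" unfolding Fa_def by blast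
  have xy1: "x + y = poly (p1 * q2 + p2 * q1) \<alpha> / poly (q1 * q2) \<alpha>"
    unfolding r(4) r(8) using r(3) r(7) by (simp add: field_simps)
  have xy2: "x * y = poly (p1 * p2) \<alpha> / poly (q1 * q2) \<alpha>"
    unfolding r(4) r(8) using r(3) r(7) by (simp add: field_simps)
  have Dx: "D' x = Dq p1 q1" unfolding r(4) using D'_eq r by blast
  have Dy: "D' y = Dq p2 q2" unfolding r(8) using D'_eq r by blast
  have "D' (x + y) = Dq (p1 * q2 + p2 * q1) (q1 * q2)" unfolding xy1
    using r by (intro D'_eq Fpoly_add[OF F] Fpoly_mult[OF F]) auto
  also have "\<dots> = Dq p1 q1 + Dq p2 q2"
    unfolding Dq_def using r
    by (simp add: E_add E_mult Fpoly_mult[OF F] field_simps power2_eq_square)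
  finally show "D' (x + y) = D' x + D' y" using Dx Dy by simp
  have "D' (x * y) = Dq (p1 * p2) (q1 * q2)" unfolding xy2
    using r by (intro D'_eq Fpoly_add[OF F] Fpoly_mult[OF F]) auto
  also have "\<dots> = x * Dq p2 q2 + y * Dq p1 q1"
    unfolding Dq_def using r
    by (simp add: E_add E_mult Fpoly_mult[OF F] field_simps power2_eq_square) algebra
  finally show "D' (x * y) = x * D' y + y * D' x" using Dx Dy by simp
qed

end

lemma extend_deriv:
  assumes "csubfield F" "is_deriv F D"
    and "\<And>p. Fpoly F p \<Longrightarrow> poly p \<alpha> = 0 \<Longrightarrow> poly (map_poly D p) \<alpha> + poly (pderiv p) \<alpha> * \<delta> = 0"
  shows "\<exists>F' D'. csubfield F' \<and> F \<subseteq> F' \<and> \<alpha> \<in> F' \<and> is_deriv F' D' \<and> (\<forall>x\<in>F. D' x = D x) \<and> D' \<alpha> = \<delta>"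
  using Fa_subfield[OF assms] F_Fa[OF assms] alpha_Fa[OF assms] D'_deriv[OF assms] D'_F[OF assms] D'_alpha[OF assms]
  by blast

definition "Ev D \<alpha> \<delta> p = poly (map_poly D p) \<alpha> + poly (pderiv p) \<alpha> * \<delta>"

lemma Ev_add: "csubfield F \<Longrightarrow> is_deriv F D \<Longrightarrow> Fpoly F p \<Longrightarrow> Fpoly F q \<Longrightarrow> Ev D \<alpha> \<delta> (p + q) = Ev D \<alpha> \<delta> p + Ev D \<alpha> \<delta> q"
  by (simp add: Ev_def dp_add pderiv_add algebra_simps)
lemma Ev_mult: "csubfield F \<Longrightarrow> is_deriv F D \<Longrightarrow> Fpoly F p \<Longrightarrow> Fpoly F q \<Longrightarrow>
   Ev D \<alpha> \<delta> (p * q) = Ev D \<alpha> \<delta> p * poly q \<alpha> + poly p \<alpha> * Ev D \<alpha> \<delta> q"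
  by (simp add: Ev_def dp_mult pderiv_mult algebra_simps)

lemma root_degree_pos: "p \<noteq> 0 \<Longrightarrow> poly p a = 0 \<Longrightarrow> degree p > 0"
proof (rule ccontr)
  assume "p \<noteq> 0" "poly p a = 0" "\<not> degree p > 0"
  then have "degree p = 0" by simp
  then obtain c where "p = [:c:]" by (rule degree_eq_zeroE)
  then show False using \<open>p \<noteq> 0\<close> \<open>poly p a = 0\<close> by simp
qed

lemma degree_reduce:
  fixes p m :: "complex poly"
  assumes "m \<noteq> 0" "degree m \<le> degree p" "degree p > 0"
  defines "s \<equiv> monom (lead_coeff p / lead_coeff m) (degree p - degree m) * m"
  shows "p - s = 0 \<or> degree (p - s) < degree p"
proof -
  have p0: "p \<noteq> 0" using assms by auto
  have c0: "lead_coeff p / lead_coeff m \<noteq> 0" using p0 assms(1) by simp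
  have ds: "degree s = degree p" unfolding s_def using c0 assms(1,2)
    by (simp add: degree_mult_eq degree_monom_eq)
  have cs: "coeff s (degree p) = lead_coeff p" unfolding s_def using assms(1,2)
    by (simp add: coeff_monom_mult)
  have le: "degree (p - s) \<le> degree p" using ds by (intro degree_diff_le) auto
  have "coeff (p - s) (degree p) = 0" using cs by simp
  then have "degree (p - s) \<noteq> degree p \<or> p - s = 0" by (metis leading_coeff_0_iff)
  then show ?thesis using le by auto
qed

lemma minpoly_cond:
  assumes F: "csubfield F" and D: "is_deriv F D"
    and m: "Fpoly F m" "m \<noteq> 0" "poly m \<alpha> = 0"
    and mmin: "\<And>q. Fpoly F q \<Longrightarrow> q \<noteq> 0 \<Longrightarrow> poly q \<alpha> = 0 \<Longrightarrow> degree m \<le> degree q"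
  defines "\<delta> \<equiv> - poly (map_poly D m) \<alpha> / poly (pderiv m) \<alpha>"
  shows "Fpoly F p \<Longrightarrow> poly p \<alpha> = 0 \<Longrightarrow> Ev D \<alpha> \<delta> p = 0"
proof -
  have dm: "degree m > 0" using m by (intro root_degree_pos) auto
  have m'0: "pderiv m \<noteq> 0" using dm by (simp add: pderiv_eq_0_iff)
  have m'a: "poly (pderiv m) \<alpha> \<noteq> 0"
  proof
    assume "poly (pderiv m) \<alpha> = 0"
    then have "degree m \<le> degree (pderiv m)" using mmin[OF Fpoly_pderiv[OF F m(1)] m'0] by blast
    then show False using dm by (simp add: degree_pderiv)
  qed
  have Em: "Ev D \<alpha> \<delta> m = 0" using m'a unfolding Ev_def \<delta>_def by simp
  show "Fpoly F p \<Longrightarrow> poly p \<alpha> = 0 \<Longrightarrow> Ev D \<alpha> \<delta> p = 0"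
  proof (induction "degree p" arbitrary: p rule: less_induct)
    case less
    show ?case
    proof (cases "p = 0")
      case True then show ?thesis by (simp add: Ev_def)
    next
      case False
      have dle: "degree m \<le> degree p" using mmin[OF less.prems(1) False less.prems(2)] .
      then have dp: "degree p > 0" using dm by simp
      define s where "s = monom (lead_coeff p / lead_coeff m) (degree p - degree m) * m"
      have Fs: "Fpoly F s" unfolding s_def using less.prems(1) m(1)
        by (intro Fpoly_mult[OF F] Fpoly_monom[OF F] Fdivide[OF F]) (auto simp: Fpoly_def)
      have Fps: "Fpoly F (p - s)" using Fs less.prems(1) by (rule Fpoly_diff[OF F, rotated])
      have ps: "poly (p - s) \<alpha> = 0" using less.prems(2) m(3) by (simp add: s_def)
      have "p - s = 0 \<or> degree (p - s) < degree p" using degree_reduce[OF m(2) dle dp] by (simp add: s_def)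
      then have E1: "Ev D \<alpha> \<delta> (p - s) = 0"
        using less.hyps[OF _ Fps ps] by (auto simp: Ev_def)
      have E2: "Ev D \<alpha> \<delta> s = 0" unfolding s_def
        using Ev_mult[OF F D, of _ m \<alpha> \<delta>] m Em Fpoly_monom[OF F] less.prems(1)
        by (simp add: Fdivide[OF F] Fpoly_def)
      have "p = (p - s) + s" by simp
      then have "Ev D \<alpha> \<delta> p = Ev D \<alpha> \<delta> (p - s) + Ev D \<alpha> \<delta> s"
        using Ev_add[OF F D Fps Fs] by metis
      then show ?thesis using E1 E2 by simp
    qed
  qed
qed

lemma extend_any:
  assumes F: "csubfield F" and D: "is_deriv F D"
  shows "\<exists>F' D'. csubfield F' \<and> F \<subseteq> F' \<and> \<alpha> \<in> F' \<and> is_deriv F' D' \<and> (\<forall>x\<in>F. D' x = D x)"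
proof (cases "\<exists>p. Fpoly F p \<and> p \<noteq> 0 \<and> poly p \<alpha> = 0")
  case True
  then obtain p where "Fpoly F p \<and> p \<noteq> 0 \<and> poly p \<alpha> = 0" by blast
  then obtain m where m: "Fpoly F m \<and> m \<noteq> 0 \<and> poly m \<alpha> = 0"
    and mmin: "\<forall>q. Fpoly F q \<and> q \<noteq> 0 \<and> poly q \<alpha> = 0 \<longrightarrow> degree m \<le> degree q"
    using ex_has_least_nat[of "\<lambda>p. Fpoly F p \<and> p \<noteq> 0 \<and> poly p \<alpha> = 0" p degree] by blast
  define \<delta> where "\<delta> = - poly (map_poly D m) \<alpha> / poly (pderiv m) \<alpha>"
  have "\<And>p. Fpoly F p \<Longrightarrow> poly p \<alpha> = 0 \<Longrightarrow> poly (map_poly D p) \<alpha> + poly (pderiv p) \<alpha> * \<delta> = 0"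
    using minpoly_cond[OF F D, of m \<alpha>] m mmin unfolding \<delta>_def Ev_def by blast
  from extend_deriv[OF F D this] show ?thesis by blast
next
  case False
  then have "\<And>p. Fpoly F p \<Longrightarrow> poly p \<alpha> = 0 \<Longrightarrow> poly (map_poly D p) \<alpha> + poly (pderiv p) \<alpha> * 0 = 0"
    by auto
  from extend_deriv[OF F D this] show ?thesis by blast
qed

lemma extend_list:
  "csubfield F \<Longrightarrow> is_deriv F D \<Longrightarrow>
   \<exists>F' D'. csubfield F' \<and> F \<subseteq> F' \<and> set xs \<subseteq> F' \<and> is_deriv F' D' \<and> (\<forall>x\<in>F. D' x = D x)"
proof (induction xs arbitrary: F D)
  case Nil then show ?case by (intro exI[of _ F] exI[of _ D]) auto
next
  case (Cons a xs)
  obtain F1 D1 where 1: "csubfield F1" "F \<subseteq> F1" "a \<in> F1" "is_deriv F1 D1" "\<forall>x\<in>F. D1 x = D x"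
    using extend_any[OF Cons.prems] by blast
  obtain F2 D2 where 2: "csubfield F2" "F1 \<subseteq> F2" "set xs \<subseteq> F2" "is_deriv F2 D2" "\<forall>x\<in>F1. D2 x = D1 x"
    using Cons.IH[OF 1(1) 1(4)] by blast
  show ?case using 1 2 by (intro exI[of _ F2] exI[of _ D2]) auto
qed

lemma is_deriv_zero: "is_deriv F (\<lambda>_. 0)" by (simp add: is_deriv_def)

lemma exists_deriv:
  assumes t: "\<not> algebraic t"
  shows "\<exists>F D. csubfield F \<and> t \<in> F \<and> set xs \<subseteq> F \<and> is_deriv F D \<and> D t = 1"
proof -
  have "\<And>p. Fpoly \<rat> p \<Longrightarrow> poly p t = 0 \<Longrightarrow> poly (map_poly (\<lambda>_. 0) p) t + poly (pderiv p) t * 1 = 0"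
  proof -
    fix p assume "Fpoly \<rat> p" "poly p t = 0"
    then have "p = 0" using t unfolding algebraic_altdef Fpoly_def by blast
    then show "poly (map_poly (\<lambda>_. 0) p) t + poly (pderiv p) t * 1 = 0" by simp
  qed
  from extend_deriv[OF csubfield_Rats is_deriv_zero this]
  obtain F1 D1 where 1: "csubfield F1" "t \<in> F1" "is_deriv F1 D1" "D1 t = 1"
    by blast
  obtain F2 D2 where 2: "csubfield F2" "F1 \<subseteq> F2" "set xs \<subseteq> F2" "is_deriv F2 D2" "\<forall>x\<in>F1. D2 x = D1 x"
    using extend_list[OF 1(1) 1(3)] by blast
  show ?thesis using 1 2 by (intro exI[of _ F2] exI[of _ D2]) auto
qed

lemma kills_algebraic:
  assumes F: "csubfield F" and D: "is_deriv F D" and x: "x \<in> F" "algebraic x"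
  shows "D x = 0"
proof -
  obtain p where "Fpoly \<rat> p \<and> p \<noteq> 0 \<and> poly p x = 0" using x(2) unfolding algebraic_altdef Fpoly_def by blast
  then obtain m where m: "Fpoly \<rat> m \<and> m \<noteq> 0 \<and> poly m x = 0"
    and mmin: "\<forall>q. Fpoly \<rat> q \<and> q \<noteq> 0 \<and> poly q x = 0 \<longrightarrow> degree m \<le> degree q"
    using ex_has_least_nat[of "\<lambda>p. Fpoly \<rat> p \<and> p \<noteq> 0 \<and> poly p x = 0" p degree] by blast
  have dm: "degree m > 0" using m by (intro root_degree_pos) auto
  have m'0: "pderiv m \<noteq> 0" using dm by (simp add: pderiv_eq_0_iff)
  have m'a: "poly (pderiv m) x \<noteq> 0"
  proof
    assume "poly (pderiv m) x = 0"
    then have "degree m \<le> degree (pderiv m)" using mmin Fpoly_pderiv[OF csubfield_Rats] m m'0 by blast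
    then show False using dm by (simp add: degree_pderiv)
  qed
  have mF: "Fpoly F m" using m FRats[OF F] by (auto simp: Fpoly_def)
  have "map_poly D m = 0"
    by (rule poly_eqI) (use m in \<open>auto simp: coeff_dp[OF F D] Fpoly_def DRats[OF F D]\<close>)
  then have "D (poly m x) = poly (pderiv m) x * D x" using D_poly[OF F D mF x(1)] by simp
  moreover have "D (poly m x) = 0" using m D0[OF F D] by simp
  ultimately show ?thesis using m'a by simp
qed

lemma dvd_by_orders:
  fixes p q :: "complex poly"
  shows "p \<noteq> 0 \<Longrightarrow> q \<noteq> 0 \<Longrightarrow> (\<And>z. poly p z = 0 \<Longrightarrow> order z p \<le> order z q) \<Longrightarrow> p dvd q"
proof (induction "degree p" arbitrary: p q rule: less_induct)
  case less
  show ?case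
  proof (cases "degree p = 0")
    case True
    then obtain c where c: "p = [:c:]" by (rule degree_eq_zeroE)
    with less.prems have "c \<noteq> 0" by simp
    then have "q = p * smult (inverse c) q" using c by simp
    then show ?thesis by (metis dvd_triv_left)
  next
    case False
    then have "\<not> constant (poly p)" using constant_degree[of p] by simp
    then obtain z where z: "poly p z = 0" using fundamental_theorem_of_algebra[of p] by blast
    then obtain p1 where p1: "p = [:-z,1:] * p1" using poly_eq_0_iff_dvd by (metis dvdE)
    have "order z p \<noteq> 0" using z less.prems(1) order_root by blast
    then have "order z q \<noteq> 0" using less.prems(3)[OF z] by simp
    then have "poly q z = 0" using order_root by blast
    then obtain q1 where q1: "q = [:-z,1:] * q1" using poly_eq_0_iff_dvd by (metis dvdE)
    have p10: "p1 \<noteq> 0" and q10: "q1 \<noteq> 0" using p1 q1 less.prems by auto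
    have "degree p = degree [:-z,1:] + degree p1" unfolding p1 by (rule degree_mult_eq) (use p10 in auto)
    then have dp: "degree p1 < degree p" by simp
    have "p1 dvd q1"
    proof (rule less.hyps[OF dp p10 q10])
      fix y assume y: "poly p1 y = 0"
      then have "poly p y = 0" using p1 by simp
      then have "order y p \<le> order y q" using less.prems(3) by blast
      moreover have "order y p = order y [:-z,1:] + order y p1"
        using less.prems(1) unfolding p1 by (rule order_mult)
      moreover have "order y q = order y [:-z,1:] + order y q1"
        using less.prems(2) unfolding q1 by (rule order_mult)
      ultimately show "order y p1 \<le> order y q1" by linarith
    qed
    then show ?thesis unfolding p1 q1 by (rule mult_dvd_mono[OF dvd_refl])
  qed
qed

lemma u_pderiv_power: "[:-z,1:] * pderiv ([:-z,1:] ^ n) = smult (of_nat n) ([:-z,1:] ^ n)"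
proof (cases n)
  case 0 then show ?thesis by simp
next
  case (Suc k)
  have d: "pderiv [:-z,1:] = 1" by (simp add: pderiv_pCons)
  have "pderiv ([:-z,1:]^Suc k) = smult (of_nat (Suc k)) ([:-z,1:]^k)"
    by (simp only: pderiv_power_Suc d mult_1_right)
  then have "[:-z,1:] * pderiv ([:-z,1:]^Suc k) = smult (of_nat (Suc k)) ([:-z,1:]^Suc k)"
    by (simp only: mult_smult_right power_Suc)
  then show ?thesis using Suc by simp
qed

lemma key_order:
  fixes Q G Bp P' :: "complex poly"
  assumes Bp0: "Bp \<noteq> 0" and ordB: "order z Bp = Suc m" and ordP: "order z P' = m"
    and id: "pderiv Bp * Q - pderiv Q * Bp = P'^2 * G" and Q0: "Q \<noteq> 0" and P0: "P' \<noteq> 0"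
  shows "order z Q \<ge> m"
proof (rule ccontr)
  assume "\<not> order z Q \<ge> m"
  then have jm: "order z Q < m" by simp
  define j where "j = order z Q"
  define k where "k = Suc m"
  define u where "u = [:-z, 1:]"
  obtain Q1 where Q1: "Q = u ^ j * Q1" "\<not> u dvd Q1" using order_decomp[OF Q0] unfolding u_def j_def by blast
  obtain B1 where B1: "Bp = u ^ k * B1" "\<not> u dvd B1" using order_decomp[OF Bp0] ordB unfolding u_def k_def by metis
  have Q1z: "poly Q1 z \<noteq> 0" using Q1(2) poly_eq_0_iff_dvd unfolding u_def by blast
  have B1z: "poly B1 z \<noteq> 0" using B1(2) poly_eq_0_iff_dvd unfolding u_def by blast
  define Z where "Z = smult (of_nat k - of_nat j) (Q1 * B1) + u * (pderiv B1 * Q1 - pderiv Q1 * B1)"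
  have uk: "u * pderiv (u ^ k) = smult (of_nat k) (u ^ k)" unfolding u_def by (rule u_pderiv_power)
  have uj: "u * pderiv (u ^ j) = smult (of_nat j) (u ^ j)" unfolding u_def by (rule u_pderiv_power)
  have "u * (pderiv Bp * Q - pderiv Q * Bp)
      = (u * pderiv (u ^ k)) * B1 * u ^ j * Q1 + u * u ^ k * pderiv B1 * u ^ j * Q1
        - ((u * pderiv (u ^ j)) * Q1 * u ^ k * B1 + u * u ^ j * pderiv Q1 * u ^ k * B1)"
    unfolding Q1(1) B1(1) by (simp add: pderiv_mult algebra_simps)
  also have "\<dots> = u ^ (j + k) * Z"
    unfolding uk uj Z_def by (simp add: algebra_simps power_add smult_diff_left)
  finally have e1: "u * P'^2 * G = u ^ (j + k) * Z" using id by (simp add: mult.assoc)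
  have kj: "k \<noteq> j" using jm unfolding k_def j_def by simp
  have Zz: "poly Z z \<noteq> 0"
    using Q1z B1z kj unfolding Z_def u_def by simp
  then have Z0: "Z \<noteq> 0" by auto
  have u0: "u \<noteq> 0" unfolding u_def by simp
  have r0: "u ^ (j + k) * Z \<noteq> 0" using Z0 u0 by simp
  then have G0: "G \<noteq> 0" using e1 by auto
  have "order z (u ^ (j + k) * Z) = j + k"
    unfolding order_mult[OF r0] using order_0I[OF Zz] by (simp add: u_def order_power_n_n)
  moreover have "order z (u * P'^2 * G) = 1 + 2 * m + order z G"
  proof -
    have n0: "u * P'^2 * G \<noteq> 0" using r0 e1 by simp
    have n1: "u * (P' * P') \<noteq> 0" using u0 P0 by simp
    have ou: "order z u = 1" using order_power_n_n[of z 1] by (simp add: u_def)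
    have "order z (u * P'^2 * G) = order z (u * (P' * P')) + order z G"
      using order_mult[OF n0] by (simp add: power2_eq_square)
    also have "\<dots> = 1 + 2 * m + order z G"
      using order_mult[OF n1] order_mult[of P' P' z] P0 ou ordP by simp
    finally show ?thesis .
  qed
  ultimately have "j + k = 1 + 2 * m + order z G" using e1 by simp
  then show False using jm unfolding k_def j_def by simp
qed

lemma order_Bp:
  fixes P R :: "complex poly"
  assumes B: "finite B" and cv: "\<And>z. poly (pderiv P) z = 0 \<Longrightarrow> poly P z \<in> B"
    and R: "R = (\<Prod>w\<in>B. [:-w,1:])" and P0: "pderiv P \<noteq> 0" and z: "poly (pderiv P) z = 0"
  shows "pcompose R P \<noteq> 0" "order z (pcompose R P) = Suc (order z (pderiv P))"
proof -
  have dP: "degree P > 0" using P0 by (simp add: pderiv_eq_0_iff)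
  have R0: "R \<noteq> 0" unfolding R using B by (simp add: prod_zero_iff)
  show Bp0: "pcompose R P \<noteq> 0" using pcompose_eq_0[OF _ dP] R0 by blast
  define w where "w = poly P z"
  have w: "w \<in> B" using cv[OF z] unfolding w_def .
  define S where "S = (\<Prod>w'\<in>B - {w}. [:-w',1:])"
  have RS: "R = [:-w,1:] * S" unfolding R S_def by (rule prod.remove[OF B w])
  define T where "T = pcompose [:-w,1:] P"
  have T: "T = P + [:-w:]" unfolding T_def by (simp add: pcompose_pCons)
  have dT: "pderiv T = pderiv P" unfolding T by (simp add: pderiv_add)
  have T0: "pderiv T \<noteq> 0" using dT P0 by simp
  have Tz: "poly T z = 0" unfolding T w_def by simp
  have oT: "order z T = Suc (order z (pderiv P))" using order_pderiv[OF _ Tz] T0 dT by fastforce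
  have "poly (pcompose S P) z = (\<Prod>w'\<in>B - {w}. w - w')"
    by (simp add: poly_pcompose S_def poly_prod w_def)
  also have "\<dots> \<noteq> 0" using B by (simp add: prod_zero_iff)
  finally have oS: "order z (pcompose S P) = 0" by (rule order_0I)
  have "pcompose R P = T * pcompose S P" unfolding RS T_def by (rule pcompose_mult)
  then show "order z (pcompose R P) = Suc (order z (pderiv P))"
    using order_mult[of T "pcompose S P" z] Bp0 oT oS by simp
qed

lemma tangent_zero:
  fixes P Q G H R :: "complex poly"
  assumes dP: "degree P \<ge> 2" and B: "finite B" and cv: "\<And>z. poly (pderiv P) z = 0 \<Longrightarrow> poly P z \<in> B"
   and R: "R = (\<Prod>w\<in>B. [:-w,1:])"
   and eqH: "pcompose R P = pderiv P * H"
   and eqG: "pcompose (pderiv R) P * Q = pderiv Q * H + pderiv P * G"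
   and dQ: "degree Q < degree P - 1"
  shows "Q = 0"
proof (rule ccontr)
  assume Q0: "Q \<noteq> 0"
  have P0: "pderiv P \<noteq> 0" using dP by (simp add: pderiv_eq_0_iff)
  define Bp where "Bp = pcompose R P"
  have "pderiv Bp * Q = pderiv P * (pcompose (pderiv R) P * Q)"
    unfolding Bp_def by (simp add: pderiv_pcompose algebra_simps)
  also have "\<dots> = pderiv Q * (pderiv P * H) + (pderiv P)^2 * G"
    unfolding eqG by (simp add: algebra_simps power2_eq_square)
  also have "\<dots> = pderiv Q * Bp + (pderiv P)^2 * G" unfolding Bp_def eqH ..
  finally have idn: "pderiv Bp * Q - pderiv Q * Bp = (pderiv P)^2 * G" by simp
  have "pderiv P dvd Q"
  proof (rule dvd_by_orders[OF P0 Q0])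
    fix z assume z: "poly (pderiv P) z = 0"
    note ob = order_Bp[OF B cv R P0 z]
    show "order z (pderiv P) \<le> order z Q"
      using key_order[OF ob(1)[folded Bp_def] ob(2)[folded Bp_def] refl idn Q0 P0] .
  qed
  then have "degree (pderiv P) \<le> degree Q" using Q0 by (rule dvd_imp_degree_le)
  then show False using dQ by (simp add: degree_pderiv)
qed

lemma Fpoly_from_list:
  assumes F: "csubfield F" and "set (map (coeff P) [0..<Suc (degree P)]) \<subseteq> F"
  shows "Fpoly F P"
  unfolding Fpoly_def
proof
  fix i show "coeff P i \<in> F"
  proof (cases "i \<le> degree P")
    case True
    have "set (map (coeff P) [0..<Suc (degree P)]) = coeff P ` {0..<Suc (degree P)}" by (simp only: set_map set_upt)
    moreover have "coeff P i \<in> coeff P ` {0..<Suc (degree P)}" using True by auto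
    ultimately show ?thesis using assms(2) by blast
  next
    case False then show ?thesis using F0[OF F] by (simp add: coeff_eq_0)
  qed
qed

lemma forward:
  fixes P :: "complex poly"
  assumes alg: "\<forall>i. algebraic (coeff P i)" and z: "poly (pderiv P) z = 0"
  shows "algebraic (poly P z)"
proof (rule ccontr)
  assume t: "\<not> algebraic (poly P z)"
  obtain F D where FD: "csubfield F" "poly P z \<in> F" "set (z # map (coeff P) [0..<Suc (degree P)]) \<subseteq> F"
     "is_deriv F D" "D (poly P z) = 1"
    using exists_deriv[OF t] by blast
  have FP: "Fpoly F P" using Fpoly_from_list[OF FD(1)] FD(3) by simp
  have zF: "z \<in> F" using FD(3) by simp
  have "map_poly D P = 0"
    by (rule poly_eqI) (use FP alg in \<open>simp add: coeff_dp[OF FD(1,4)] kills_algebraic[OF FD(1,4)] Fpoly_def\<close>)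
  then have "D (poly P z) = 0" using D_poly[OF FD(1,4) FP zF] z by simp
  then show False using FD(5) by simp
qed

lemma backward:
  fixes P :: "complex poly"
  assumes dP: "degree P = n" "n \<ge> 2" and lc: "lead_coeff P = 1" and c1: "coeff P (n - 1) = 0"
    and cv: "\<forall>w \<in> critical_values P. algebraic w"
  shows "algebraic (coeff P i)"
proof (rule ccontr)
  assume t: "\<not> algebraic (coeff P i)"
  have P0: "pderiv P \<noteq> 0" using dP by (simp add: pderiv_eq_0_iff)
  define B where "B = critical_values P"
  have Beq: "B = poly P ` {z. poly (pderiv P) z = 0}" unfolding B_def critical_values_def by auto
  have Bfin: "finite B" unfolding Beq using poly_roots_finite[OF P0] by simp
  have cvB: "\<And>z. poly (pderiv P) z = 0 \<Longrightarrow> poly P z \<in> B" unfolding Beq by simp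
  define R where "R = (\<Prod>w\<in>B. [:-w,1:])"
  have "pderiv P dvd pcompose R P"
  proof (rule dvd_by_orders[OF P0])
    have R0: "R \<noteq> 0" unfolding R_def using Bfin by (simp add: prod_zero_iff)
    have "degree P > 0" using dP by simp
    then show "pcompose R P \<noteq> 0" using pcompose_eq_0 R0 by blast
  next
    fix z assume z: "poly (pderiv P) z = 0"
    show "order z (pderiv P) \<le> order z (pcompose R P)" using order_Bp(2)[OF Bfin cvB R_def P0 z] by simp
  qed
  then obtain H where eqH: "pcompose R P = pderiv P * H" by (rule dvdE)
  obtain ws where ws: "set ws = B" using finite_list[OF Bfin] by blast
  define xs where "xs = map (coeff P) [0..<Suc (degree P)] @ ws @ map (coeff H) [0..<Suc (degree H)]"
  obtain F D where FD: "csubfield F" "coeff P i \<in> F" "set xs \<subseteq> F" "is_deriv F D" "D (coeff P i) = 1"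
    using exists_deriv[OF t] by blast
  note F = FD(1) and D = FD(4)
  have FP: "Fpoly F P" using Fpoly_from_list[OF F] FD(3) unfolding xs_def by simp
  have FH: "Fpoly F H" using Fpoly_from_list[OF F] FD(3) unfolding xs_def by simp
  have BF: "B \<subseteq> F" using FD(3) ws unfolding xs_def by auto
  have DB: "\<And>w. w \<in> B \<Longrightarrow> D w = 0"
    using kills_algebraic[OF F D] BF cv unfolding B_def by blast
  have Flin: "\<And>w. w \<in> B \<Longrightarrow> Fpoly F [:-w,1:]"
    using BF by (auto intro!: Fpoly_pCons[OF F] Fuminus[OF F] Fpoly_const[OF F] F1[OF F])
  have FR: "Fpoly F R" unfolding R_def using Flin by (rule Fpoly_prod[OF F])
  have Dlin: "\<And>w. w \<in> B \<Longrightarrow> map_poly D [:-w,1:] = 0"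
  proof -
    fix w assume w: "w \<in> B"
    have "D (-w) = 0" using Duminus[OF F D, of w] DB[OF w] BF w by auto
    then show "map_poly D [:-w,1:] = 0"
      by (intro poly_eqI) (simp add: coeff_dp[OF F D] coeff_pCons D0[OF F D] D1[OF F D] split: nat.splits)
  qed
  have DR: "map_poly D R = 0" unfolding R_def using Flin Dlin by (rule dp_prod[OF F D])
  define Q where "Q = map_poly D P"
  define G where "G = map_poly D H"
  have "map_poly D (pcompose R P) = pcompose (pderiv R) P * Q"
    using dp_pcompose[OF F D FR FP] DR unfolding Q_def by simp
  moreover have "map_poly D (pderiv P * H) = pderiv Q * H + pderiv P * G"
    unfolding Q_def G_def using dp_mult[OF F D Fpoly_pderiv[OF F FP] FH] dp_pderiv[OF F D FP] by simp
  ultimately have eqG: "pcompose (pderiv R) P * Q = pderiv Q * H + pderiv P * G"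
    using eqH by simp
  have "degree Q \<le> n - 2"
  proof (rule degree_le, intro allI impI)
    fix j assume j: "n - 2 < j"
    have "coeff P j \<in> {0, 1}"
    proof (cases "j = n - 1")
      case True then show ?thesis using c1 by simp
    next
      case False
      then have "j = n \<or> j > n" using j dP by auto
      then show ?thesis using lc dP by (auto simp: coeff_eq_0)
    qed
    then show "coeff Q j = 0" unfolding Q_def using D0[OF F D] D1[OF F D] by (auto simp: coeff_dp[OF F D])
  qed
  then have dQ: "degree Q < degree P - 1" using dP by simp
  have "Q = 0" using tangent_zero[of P B R H Q G] dP Bfin cvB R_def eqH eqG dQ by simp
  then have "D (coeff P i) = 0" unfolding Q_def using coeff_dp[OF F D, of P i] by simp
  then show False using FD(5) by simp
qed

theorem mainTheorem1:
  fixes P :: "complex poly" and n :: nat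
  assumes "n \<ge> 1" and "degree P = n" and "normalized_poly P"
  shows "(\<forall>i. algebraic (coeff P i)) \<longleftrightarrow> (\<forall>w \<in> critical_values P. algebraic w)"
proof
  assume "\<forall>i. algebraic (coeff P i)"
  then show "\<forall>w \<in> critical_values P. algebraic w"
    unfolding critical_values_def using forward by blast
next
  assume cv: "\<forall>w \<in> critical_values P. algebraic w"
  have lc: "lead_coeff P = 1" and c1: "coeff P (n - 1) = 0"
    using assms(2,3) unfolding normalized_poly_def by auto
  show "\<forall>i. algebraic (coeff P i)"
  proof (cases "n = 1")
    case True
    show ?thesis
    proof
      fix i show "algebraic (coeff P i)"
      proof (cases "i \<le> 1")
        case True
        then have "i = 0 \<or> i = 1" by auto
        then show ?thesis using lc c1 \<open>n = 1\<close> assms(2) by auto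
      next
        case False then show ?thesis using \<open>n = 1\<close> assms(2) by (simp add: coeff_eq_0)
      qed
    qed
  next
    case False
    then have "n \<ge> 2" using assms(1) by simp
    then show ?thesis using backward[OF assms(2) _ lc c1 cv] by blast
  qed
qed

end
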